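(* Every functional $\Lambda$-system algebra over a set $\mathcal{X}$ that has unique fixed points and whose function $\Gamma$ permits reordering is connection-order invariant.
   Context: Let $\Lambda,\mathcal{X}$ be sets. For finite disjoint $\mathcal{I},\mathcal{O}\subseteq\Lambda$ let $\mathfrak{S}_{\mathcal{I},\mathcal{O}}$ be a set of functions $s:\mathcal{X}^{\mathcal{I}}\to\mathcal{X}^{\mathcal{O}}$ (where $\mathcal{X}^{\mathcal{I}}$ is the set of functions $\mathcal{I}\to\mathcal{X}$, i.e. tuples indexed by $\mathcal{I}$), and let $\mathfrak{S}$ be their union. For $s\in\mathfrak{S}_{\mathcal{I},\mathcal{O}}$, $i\in\mathcal{I}$, $o\in\mathcal{O}$, $\mathbf{x}\in\mathcal{X}^{\mathcal{I}\setminus\{i\}}$ let $\mathrm{Fix}(s,i,o,\mathbf{x}):=\{x_i\in\mathcal{X}\mid s(\mathbf{x}\cup\{(i,x_i)\})(o)=x_i\}$. Let $\Gamma$ assign to each $s\in\mathfrak{S}_{\mathcal{I},\mathcal{O}}$ a set of unordered pairs $\{i,o\}$ with $i\in\mathcal{I}$, $o\in\mathcal{O}$, such that $\mathrm{Fix}(s,i,o,\mathbf{x})\neq\emptyset$ for all $\mathbf{x}$, and for each such $s$ and $\{i,o\}\in\Gamma(s)$ let $\phi^s_{i,o}:\mathcal{X}^{\mathcal{I}\setminus\{i\}}\to\mathcal{X}$ satisfy $\phi^s_{i,o}(\mathbf{x})\in\mathrm{Fix}(s,i,o,\mathbf{x})$. Define $\lambda(s)=\mathcal{I}\cup\mathcal{O}$;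 for $s_1\in\mathfrak{S}_{\mathcal{I}_1,\mathcal{O}_1}$, $s_2\in\mathfrak{S}_{\mathcal{I}_2,\mathcal{O}_2}$ with $\mathcal{I}_1,\mathcal{I}_2,\mathcal{O}_1,\mathcal{O}_2$ pairwise disjoint, $s_1\parallel s_2:\mathcal{X}^{\mathcal{I}_1\cup\mathcal{I}_2}\to\mathcal{X}^{\mathcal{O}_1\cup\mathcal{O}_2}$ with $(s_1\parallel s_2)(\mathbf{x})(o_j)=s_j(\mathbf{x}|_{\mathcal{I}_j})(o_j)$ for $o_j\in\mathcal{O}_j$; and for $\{i,o\}\in\Gamma(s)$, $\gamma_{i,o}(s):\mathcal{X}^{\mathcal{I}\setminus\{i\}}\to\mathcal{X}^{\mathcal{O}\setminus\{o\}}$, $\gamma_{i,o}(s)(\mathbf{x})=s(\mathbf{x}\cup\{(i,\phi^s_{i,o}(\mathbf{x}))\})|_{\mathcal{O}\setminus\{o\}}$. If $\mathfrak{S}$ is closed under $\parallel$ and $\gamma$ and for all $s_1,s_2$ with $\lambda(s_1)\cap\lambda(s_2)=\emptyset$, $j\in\{1,2\}$, $i,o\in\lambda(s_j)$ we have $\{i,o\}\in\Gamma(s_1\parallel s_2)\iff\{i,o\}\in\Gamma(s_j)$, then $(\mathfrak{S},\lambda,\parallel,\Gamma,\gamma)$ is called a functional $\Lambda$-system algebra over $\mathcal{X}$. It has unique fixed points if $|\mathrm{Fix}(s,i,o,\mathbf{x})|=1$ for all $s$, $\{i,o\}\in\Gamma(s)$, $\mathbf{x}$. $\Gamma$ permits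 reordering if for all $s$, $\{i,o\}\in\Gamma(s)$ and $\{i',o'\}\in\Gamma(\gamma_{i,o}(s))$ we have $\{i',o'\}\in\Gamma(s)$ and $\{i,o\}\in\Gamma(\gamma_{i',o'}(s))$; the algebra is connection-order invariant if $\Gamma$ permits reordering and in that situation $\gamma_{i',o'}(\gamma_{i,o}(s))=\gamma_{i,o}(\gamma_{i',o'}(s))$. *)

theory Defs
  imports Main
begin

text \<open>A system with input labels I, output labels O and underlying function
  X^I -> X^O.
  The function component is normalised to Map.empty outside X^I, so that
  equality of systems is equality of functions on X^I (together with I and O).\<close>

type_synonym ('l, 'x) sys = "'l set \<times> 'l set \<times> (('l \<rightharpoonup> 'x) \<Rightarrow> ('l \<rightharpoonup> 'x))"

definition ins :: "('l, 'x) sys \<Rightarrow> 'l set" where "ins s = fst s"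
definition outs :: "('l, 'x) sys \<Rightarrow> 'l set" where "outs s = fst (snd s)"
definition fn :: "('l, 'x) sys \<Rightarrow> ('l \<rightharpoonup> 'x) \<Rightarrow> ('l \<rightharpoonup> 'x)" where "fn s = snd (snd s)"

definition tuples :: "'x set \<Rightarrow> 'l set \<Rightarrow> ('l \<rightharpoonup> 'x) set" where
  "tuples X I = {m. dom m = I \<and> ran m \<subseteq> X}"

definition wf_sys :: "'x set \<Rightarrow> ('l, 'x) sys \<Rightarrow> bool" where
  "wf_sys X s \<longleftrightarrow> finite (ins s) \<and> finite (outs s) \<and> ins s \<inter> outs s = {}
     \<and> (\<forall>m \<in> tuples X (ins s). fn s m \<in> tuples X (outs s))
     \<and> (\<forall>m. m \<notin> tuples X (ins s) \<longrightarrow> fn s m = Map.empty)"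

definition lam :: "('l, 'x) sys \<Rightarrow> 'l set" where "lam s = ins s \<union> outs s"

definition Fix :: "'x set \<Rightarrow> ('l, 'x) sys \<Rightarrow> 'l \<Rightarrow> 'l \<Rightarrow> ('l \<rightharpoonup> 'x) \<Rightarrow> 'x set" where
  "Fix X s i ou x = {v \<in> X. fn s (x(i \<mapsto> v)) ou = Some v}"

definition par :: "'x set \<Rightarrow> ('l, 'x) sys \<Rightarrow> ('l, 'x) sys \<Rightarrow> ('l, 'x) sys" where
  "par X s1 s2 = (ins s1 \<union> ins s2, outs s1 \<union> outs s2,
     \<lambda>m. if m \<in> tuples X (ins s1 \<union> ins s2)
          then fn s1 (m |` ins s1) ++ fn s2 (m |` ins s2) else Map.empty)"

definition gam :: "'x set \<Rightarrow> (('l, 'x) sys \<Rightarrow> 'l \<Rightarrow> 'l \<Rightarrow> ('l \<rightharpoonup> 'x) \<Rightarrow> 'x)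
    \<Rightarrow> ('l, 'x) sys \<Rightarrow> 'l \<Rightarrow> 'l \<Rightarrow> ('l, 'x) sys" where
  "gam X phi s i ou = (ins s - {i}, outs s - {ou},
     \<lambda>m. if m \<in> tuples X (ins s - {i})
          then fn s (m(i \<mapsto> phi s i ou m)) |` (outs s - {ou}) else Map.empty)"

definition functional_system_algebra ::
  "'x set \<Rightarrow> ('l, 'x) sys set \<Rightarrow> (('l, 'x) sys \<Rightarrow> 'l set set)
    \<Rightarrow> (('l, 'x) sys \<Rightarrow> 'l \<Rightarrow> 'l \<Rightarrow> ('l \<rightharpoonup> 'x) \<Rightarrow> 'x) \<Rightarrow> bool" where
  "functional_system_algebra X S \<Gamma> phi \<longleftrightarrow>
     (\<forall>s \<in> S. wf_sys X s)
   \<and> (\<forall>s \<in> S. \<forall>c \<in> \<Gamma> s. \<exists>i \<in> ins s. \<exists>ou \<in> outs s. c = {i, ou})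
   \<and> (\<forall>s \<in> S. \<forall>i \<in> ins s. \<forall>ou \<in> outs s. {i, ou} \<in> \<Gamma> s \<longrightarrow>
        (\<forall>x \<in> tuples X (ins s - {i}). Fix X s i ou x \<noteq> {} \<and> phi s i ou x \<in> Fix X s i ou x))
   \<and> (\<forall>s1 \<in> S. \<forall>s2 \<in> S. ins s1 \<inter> ins s2 = {} \<and> ins s1 \<inter> outs s2 = {}
        \<and> outs s1 \<inter> ins s2 = {} \<and> outs s1 \<inter> outs s2 = {} \<longrightarrow> par X s1 s2 \<in> S)
   \<and> (\<forall>s \<in> S. \<forall>i \<in> ins s. \<forall>ou \<in> outs s. {i, ou} \<in> \<Gamma> s \<longrightarrow> gam X phi s i ou \<in> S)
   \<and> (\<forall>s1 \<in> S. \<forall>s2 \<in> S. lam s1 \<inter> lam s2 = {} \<longrightarrow>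
        (\<forall>sj \<in> {s1, s2}. \<forall>i \<in> lam sj. \<forall>ou \<in> lam sj.
           {i, ou} \<in> \<Gamma> (par X s1 s2) \<longleftrightarrow> {i, ou} \<in> \<Gamma> sj))"

definition unique_fixed_points ::
  "'x set \<Rightarrow> ('l, 'x) sys set \<Rightarrow> (('l, 'x) sys \<Rightarrow> 'l set set) \<Rightarrow> bool" where
  "unique_fixed_points X S \<Gamma> \<longleftrightarrow>
     (\<forall>s \<in> S. \<forall>i \<in> ins s. \<forall>ou \<in> outs s. {i, ou} \<in> \<Gamma> s \<longrightarrow>
        (\<forall>x \<in> tuples X (ins s - {i}). card (Fix X s i ou x) = 1))"

definition permits_reordering ::
  "'x set \<Rightarrow> ('l, 'x) sys set \<Rightarrow> (('l, 'x) sys \<Rightarrow> 'l set set)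
    \<Rightarrow> (('l, 'x) sys \<Rightarrow> 'l \<Rightarrow> 'l \<Rightarrow> ('l \<rightharpoonup> 'x) \<Rightarrow> 'x) \<Rightarrow> bool" where
  "permits_reordering X S \<Gamma> phi \<longleftrightarrow>
     (\<forall>s \<in> S. \<forall>i \<in> ins s. \<forall>ou \<in> outs s. \<forall>i' \<in> ins (gam X phi s i ou). \<forall>o' \<in> outs (gam X phi s i ou).
        {i, ou} \<in> \<Gamma> s \<and> {i', o'} \<in> \<Gamma> (gam X phi s i ou) \<longrightarrow>
        {i', o'} \<in> \<Gamma> s \<and> {i, ou} \<in> \<Gamma> (gam X phi s i' o'))"

definition connection_order_invariant ::
  "'x set \<Rightarrow> ('l, 'x) sys set \<Rightarrow> (('l, 'x) sys \<Rightarrow> 'l set set)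
    \<Rightarrow> (('l, 'x) sys \<Rightarrow> 'l \<Rightarrow> 'l \<Rightarrow> ('l \<rightharpoonup> 'x) \<Rightarrow> 'x) \<Rightarrow> bool" where
  "connection_order_invariant X S \<Gamma> phi \<longleftrightarrow>
     permits_reordering X S \<Gamma> phi \<and>
     (\<forall>s \<in> S. \<forall>i \<in> ins s. \<forall>ou \<in> outs s. \<forall>i' \<in> ins (gam X phi s i ou). \<forall>o' \<in> outs (gam X phi s i ou).
        {i, ou} \<in> \<Gamma> s \<and> {i', o'} \<in> \<Gamma> (gam X phi s i ou) \<longrightarrow>
        gam X phi (gam X phi s i ou) i' o' = gam X phi (gam X phi s i' o') i ou)"

end

theory Submission
  imports Defs
begin

lemma gam_ins[simp]: "ins (gam X phi s i ou) = ins s - {i}"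
  by (simp add: gam_def ins_def)
lemma gam_outs[simp]: "outs (gam X phi s i ou) = outs s - {ou}"
  by (simp add: gam_def outs_def)
lemma gam_fn: "fn (gam X phi s i ou) m = (if m \<in> tuples X (ins s - {i})
          then fn s (m(i \<mapsto> phi s i ou m)) |` (outs s - {ou}) else Map.empty)"
  by (simp add: gam_def fn_def ins_def outs_def)

lemma card1_eq: "card F = 1 \<Longrightarrow> x \<in> F \<Longrightarrow> y \<in> F \<Longrightarrow> x = y"
  by (metis card_1_singletonE singletonD)

lemma tuples_upd: "m \<in> tuples X (A - {i}) \<Longrightarrow> v \<in> X \<Longrightarrow> i \<in> A \<Longrightarrow> m(i \<mapsto> v) \<in> tuples X A"
  unfolding tuples_def by (auto simp: ran_def) 

lemma tuples_upd2: "m \<in> tuples X (A - {i} - {i'}) \<Longrightarrow> v \<in> X \<Longrightarrow> i' \<in> A \<Longrightarrow> i' \<noteq> i \<Longrightarrow> m(i' \<mapsto> v) \<in> tuples X (A - {i})"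
  unfolding tuples_def by (auto simp: ran_def) 

theorem lemma4p4:
  fixes X :: "'x set" and S :: "('l, 'x) sys set"
    and \<Gamma> :: "('l, 'x) sys \<Rightarrow> 'l set set"
    and phi :: "('l, 'x) sys \<Rightarrow> 'l \<Rightarrow> 'l \<Rightarrow> ('l \<rightharpoonup> 'x) \<Rightarrow> 'x"
  assumes A: "functional_system_algebra X S \<Gamma> phi"
    and U: "unique_fixed_points X S \<Gamma>"
    and R: "permits_reordering X S \<Gamma> phi"
  shows "connection_order_invariant X S \<Gamma> phi"
  unfolding connection_order_invariant_def
proof (intro conjI R ballI impI)
  fix s i ou i' o'
  assume s: "s \<in> S" and i: "i \<in> ins s" and ou: "ou \<in> outs s"
    and i': "i' \<in> ins (gam X phi s i ou)" and o': "o' \<in> outs (gam X phi s i ou)"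
    and G: "{i, ou} \<in> \<Gamma> s \<and> {i', o'} \<in> \<Gamma> (gam X phi s i ou)"
  let ?t1 = "gam X phi s i ou"
  have i's: "i' \<in> ins s" "i' \<noteq> i" and o's: "o' \<in> outs s" "o' \<noteq> ou" using i' o' by auto
  have G1: "{i, ou} \<in> \<Gamma> s" and G2: "{i', o'} \<in> \<Gamma> ?t1" using G by auto
  have G3: "{i', o'} \<in> \<Gamma> s" and G4: "{i, ou} \<in> \<Gamma> (gam X phi s i' o')"
    using R s i ou i' o' G unfolding permits_reordering_def by blast+
  let ?t2 = "gam X phi s i' o'"
  have Afix: "\<And>s i ou x. s \<in> S \<Longrightarrow> i \<in> ins s \<Longrightarrow> ou \<in> outs s \<Longrightarrow> {i, ou} \<in> \<Gamma> s \<Longrightarrow>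
      x \<in> tuples X (ins s - {i}) \<Longrightarrow> phi s i ou x \<in> Fix X s i ou x"
    using A unfolding functional_system_algebra_def by blast
  have Agam: "\<And>s i ou. s \<in> S \<Longrightarrow> i \<in> ins s \<Longrightarrow> ou \<in> outs s \<Longrightarrow> {i, ou} \<in> \<Gamma> s \<Longrightarrow>
      gam X phi s i ou \<in> S"
    using A unfolding functional_system_algebra_def by blast
  have Uq: "\<And>s i ou x a b. s \<in> S \<Longrightarrow> i \<in> ins s \<Longrightarrow> ou \<in> outs s \<Longrightarrow> {i, ou} \<in> \<Gamma> s \<Longrightarrow>
      x \<in> tuples X (ins s - {i}) \<Longrightarrow> a \<in> Fix X s i ou x \<Longrightarrow> b \<in> Fix X s i ou x \<Longrightarrow> a = b"
    using U unfolding unique_fixed_points_def by (meson card1_eq)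
  have t1S: "?t1 \<in> S" using Agam s i ou G1 by blast
  have t2S: "?t2 \<in> S" using Agam s i's o's G3 by blast
  have i2: "i \<in> ins ?t2" and ou2: "ou \<in> outs ?t2" using i ou i's o's by auto
  show "gam X phi ?t1 i' o' = gam X phi ?t2 i ou"
  proof -
    have eqf: "fn (gam X phi ?t1 i' o') m = fn (gam X phi ?t2 i ou) m" for m
    proof (cases "m \<in> tuples X (ins s - {i} - {i'})")
      case False
      moreover have "ins s - {i'} - {i} = ins s - {i} - {i'}" by auto
      ultimately show ?thesis by (simp add: gam_fn)
    next
      case True
      have mT2: "m \<in> tuples X (ins s - {i'} - {i})"
        using True by (metis Diff_insert Diff_insert2)
      define a where "a = phi ?t1 i' o' m"
      have aF: "a \<in> Fix X ?t1 i' o' m" unfolding a_def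
        using Afix[OF t1S i' o' G2] True by simp
      hence aX: "a \<in> X" by (simp add: Fix_def)
      have ma: "m(i' \<mapsto> a) \<in> tuples X (ins s - {i})"
        using tuples_upd2[OF True aX i's] .
      define b where "b = phi s i ou (m(i' \<mapsto> a))"
      have bF: "b \<in> Fix X s i ou (m(i' \<mapsto> a))" unfolding b_def
        using Afix[OF s i ou G1 ma] .
      define c where "c = phi ?t2 i ou m"
      have cF: "c \<in> Fix X ?t2 i ou m" unfolding c_def
        using Afix[OF t2S i2 ou2 G4] mT2 by simp
      hence cX: "c \<in> X" by (simp add: Fix_def)
      have mc: "m(i \<mapsto> c) \<in> tuples X (ins s - {i'})"
        using tuples_upd2[OF mT2 cX i] i's by auto
      define d where "d = phi s i' o' (m(i \<mapsto> c))"
      have dF: "d \<in> Fix X s i' o' (m(i \<mapsto> c))" unfolding d_def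
        using Afix[OF s i's(1) o's(1) G3 mc] .
      hence dX: "d \<in> X" by (simp add: Fix_def)
      have comm: "m(i \<mapsto> c, i' \<mapsto> d) = m(i' \<mapsto> d, i \<mapsto> c)"
        using i's by (simp add: fun_upd_twist)
      have cfix: "fn ?t2 (m(i \<mapsto> c)) ou = Some c" using cF by (simp add: Fix_def)
      hence c1: "fn s (m(i \<mapsto> c, i' \<mapsto> d)) ou = Some c"
        using mc o's by (simp add: gam_fn d_def restrict_map_def split: if_splits)
      have d1: "fn s (m(i \<mapsto> c, i' \<mapsto> d)) o' = Some d"
        using dF by (simp add: Fix_def)
      have md: "m(i' \<mapsto> d) \<in> tuples X (ins s - {i})"
        using tuples_upd2[OF True dX i's] .
      have cF2: "c \<in> Fix X s i ou (m(i' \<mapsto> d))"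
        using c1 cX comm by (simp add: Fix_def)
      have b'c: "phi s i ou (m(i' \<mapsto> d)) = c"
        using Uq[OF s i ou G1 md Afix[OF s i ou G1 md] cF2] .
      have dF1: "d \<in> Fix X ?t1 i' o' m"
        using md dX d1 comm b'c o's by (simp add: Fix_def gam_fn)
      have ad: "a = d" using Uq[OF t1S i' o' G2 _ aF dF1] True by simp
      have bc: "b = c" using b'c ad b_def by simp
      have L: "fn (gam X phi ?t1 i' o') m = fn s (m(i' \<mapsto> a, i \<mapsto> b)) |` (outs s - {ou} - {o'})"
        using True ma by (simp add: gam_fn a_def b_def Int_absorb1 Diff_subset)
      have Rr: "fn (gam X phi ?t2 i ou) m = fn s (m(i \<mapsto> c, i' \<mapsto> d)) |` (outs s - {o'} - {ou})"
        using mT2 mc by (simp add: gam_fn c_def d_def Int_absorb1 Diff_subset)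
      have "outs s - {ou} - {o'} = outs s - {o'} - {ou}" by auto
      thus ?thesis using L Rr comm ad bc by simp
    qed
    have "ins s - {i'} - {i} = ins s - {i} - {i'}" "outs s - {o'} - {ou} = outs s - {ou} - {o'}" by auto
    with eqf show ?thesis
      by (simp add: gam_def ins_def outs_def fn_def)
  qed
qed

end
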